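(* Let $f:G\to H$ be a locally sectionable group homomorphism. Then $\sigma(H)\leq \mathrm{sec}(f)\leq \sigma_c(H)$. In particular, if $\sigma(H)=\sigma_c(H)$, then $\mathrm{sec}(f)=\sigma_c(H)=\sigma(H)$.
   Context: For a homomorphism $f:G\to H$ and a subgroup $L\le H$, a local section of $f$ on $L$ is a homomorphism $s:L\to G$ with $f\circ s=\mathrm{incl}_L$ (the inclusion $L\hookrightarrow H$). $f$ is locally sectionable if for every $b\in H$, $b\neq 1$, there is a subgroup $L\le H$ containing $b$ on which $f$ admits a local section. The sectional number $\mathrm{sec}(f)$ is the least positive integer $m$ such that there exist proper subgroups $H_1,\ldots,H_m$ of $H$ with $H=H_1\cup\cdots\cup H_m$ and such that $f$ admits a local section on each $H_i$; $\mathrm{sec}(f)=\infty$ if no such $m$ exists. The covering number $\sigma(H)$ is the least positive integer $m$ such that $H$ is a union of $m$ proper subgroups, and the cyclic covering number $\sigma_c(H)$ is the least positive integer $m$ such that $H$ is a union of $m$ cyclic proper subgroups (each being $\infty$ if no such $m$ exists). *)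

theory Defs
  imports "HOL-Algebra.Algebra" "HOL-Library.Extended_Nat"
begin

definition local_section_on ::
  "('a, 'c) monoid_scheme \<Rightarrow> ('b, 'd) monoid_scheme \<Rightarrow> ('a \<Rightarrow> 'b) \<Rightarrow> 'b set \<Rightarrow> bool" where
  "local_section_on G H f L \<longleftrightarrow>
     (\<exists>s. s \<in> hom (H\<lparr>carrier := L\<rparr>) G \<and> (\<forall>x\<in>L. f (s x) = x))"

definition locally_sectionable ::
  "('a, 'c) monoid_scheme \<Rightarrow> ('b, 'd) monoid_scheme \<Rightarrow> ('a \<Rightarrow> 'b) \<Rightarrow> bool" where
  "locally_sectionable G H f \<longleftrightarrow>
     (\<forall>b\<in>carrier H. b \<noteq> \<one>\<^bsub>H\<^esub> \<longrightarrow>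
        (\<exists>L. subgroup L H \<and> b \<in> L \<and> local_section_on G H f L))"

text \<open>Least positive m such that carrier H is the union of m proper subgroups each
  satisfying P; infinity (Inf of the empty set in enat) if no such m exists.\<close>
definition cover_number :: "('b, 'd) monoid_scheme \<Rightarrow> ('b set \<Rightarrow> bool) \<Rightarrow> enat" where
  "cover_number H P = Inf {enat m | m. m > 0 \<and>
     (\<exists>Hs :: nat \<Rightarrow> 'b set. (\<forall>i<m. subgroup (Hs i) H \<and> Hs i \<noteq> carrier H \<and> P (Hs i))
        \<and> (\<Union>i<m. Hs i) = carrier H)}"

definition sectional_number ::
  "('a, 'c) monoid_scheme \<Rightarrow> ('b, 'd) monoid_scheme \<Rightarrow> ('a \<Rightarrow> 'b) \<Rightarrow> enat" where
  "sectional_number G H f = cover_number H (local_section_on G H f)"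

definition covering_number :: "('b, 'd) monoid_scheme \<Rightarrow> enat" where
  "covering_number H = cover_number H (\<lambda>_. True)"

definition cyclic_covering_number :: "('b, 'd) monoid_scheme \<Rightarrow> enat" where
  "cyclic_covering_number H = cover_number H (\<lambda>K. \<exists>g\<in>carrier H. K = generate H {g})"

end

theory Submission
  imports Defs
begin

lemma cover_mono:
  assumes "\<And>K. subgroup K H \<Longrightarrow> Q K \<Longrightarrow> P K"
  shows "cover_number H P \<le> cover_number H Q"
  unfolding cover_number_def
  by (rule Inf_superset_mono) (use assms in blast)

lemma ls_sub:
  assumes "local_section_on G H f L" "L' \<subseteq> L"
  shows "local_section_on G H f L'"
proof -
  obtain s where s: "s \<in> hom (H\<lparr>carrier := L\<rparr>) G" "\<forall>x\<in>L. f (s x) = x"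
    using assms(1) unfolding local_section_on_def by blast
  have "s \<in> hom (H\<lparr>carrier := L'\<rparr>) G"
    using s(1) assms(2) unfolding hom_def Pi_def by auto
  thus ?thesis using s(2) assms(2) unfolding local_section_on_def by blast
qed

lemma ls_triv:
  assumes "group G" "group H" "f \<in> hom G H"
  shows "local_section_on G H f {\<one>\<^bsub>H\<^esub>}"
proof -
  have "(\<lambda>_. \<one>\<^bsub>G\<^esub>) \<in> hom (H\<lparr>carrier := {\<one>\<^bsub>H\<^esub>}\<rparr>) G"
    using assms(1) unfolding hom_def by (auto simp: group.is_monoid)
  moreover have "f \<one>\<^bsub>G\<^esub> = \<one>\<^bsub>H\<^esub>"
    using assms by (simp add: group_hom.hom_one group_hom_axioms_def group_hom_def)
  ultimately show ?thesis unfolding local_section_on_def by auto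
qed

lemma cyc_ls:
  assumes "group G" "group H" "f \<in> hom G H" "locally_sectionable G H f"
    and "g \<in> carrier H"
  shows "local_section_on G H f (generate H {g})"
proof (cases "g = \<one>\<^bsub>H\<^esub>")
  case True
  have "generate H {g} \<subseteq> {\<one>\<^bsub>H\<^esub>}"
    using True group.generate_subgroup_incl[OF assms(2)] group.triv_subgroup[OF assms(2)] by blast
  thus ?thesis using ls_sub ls_triv[OF assms(1-3)] by blast
next
  case False
  then obtain L where L: "subgroup L H" "g \<in> L" "local_section_on G H f L"
    using assms(4,5) unfolding locally_sectionable_def by blast
  have "generate H {g} \<subseteq> L"
    using L group.generate_subgroup_incl[OF assms(2)] by blast
  thus ?thesis using ls_sub L(3) by blast
qed

theorem corollary2p21:
  fixes G :: "('a, 'c) monoid_scheme" and H :: "('b, 'd) monoid_scheme" and f :: "'a \<Rightarrow> 'b"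
  assumes "group G" and "group H" and "f \<in> hom G H"
    and "locally_sectionable G H f"
  shows "covering_number H \<le> sectional_number G H f
         \<and> sectional_number G H f \<le> cyclic_covering_number H
         \<and> (covering_number H = cyclic_covering_number H \<longrightarrow>
              sectional_number G H f = cyclic_covering_number H
              \<and> cyclic_covering_number H = covering_number H)"
proof -
  have 1: "covering_number H \<le> sectional_number G H f"
    unfolding covering_number_def sectional_number_def by (rule cover_mono) simp
  have 2: "sectional_number G H f \<le> cyclic_covering_number H"
    unfolding cyclic_covering_number_def sectional_number_def
    by (rule cover_mono) (use cyc_ls[OF assms] in blast)
  show ?thesis using 1 2 by auto
qed

end
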